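(* Let $(g,q,w)$ be an $m\times n$ absorbing game with all entries of $g,q,w$ rational and with deterministic transitions, i.e. $q_{ij}\in\{0,1\}$ for all $(i,j)$. If $\min(m,n)<3$, then the limit value $v=\lim_{\lambda\to0}v_\lambda$ is a rational number. *)

theory Defs
  imports "HOL-Analysis.Analysis"
begin

definition mixed_strats :: "nat \<Rightarrow> (nat \<Rightarrow> real) set" where
  "mixed_strats k = {x. (\<forall>i<k. 0 \<le> x i) \<and> (\<Sum>i<k. x i) = 1 \<and> (\<forall>i\<ge>k. x i = 0)}"

definition bil :: "nat \<Rightarrow> nat \<Rightarrow> (nat \<Rightarrow> nat \<Rightarrow> real) \<Rightarrow> (nat \<Rightarrow> real) \<Rightarrow> (nat \<Rightarrow> real) \<Rightarrow> real" where
  "bil m n A x y = (\<Sum>i<m. \<Sum>j<n. x i * y j * A i j)"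

definition mval :: "nat \<Rightarrow> nat \<Rightarrow> (nat \<Rightarrow> nat \<Rightarrow> real) \<Rightarrow> real" where
  "mval m n A = (SUP x\<in>mixed_strats m. INF y\<in>mixed_strats n. bil m n A x y)"

text \<open>Shapley operator of the absorbing game (g,q,w) with discount factor l:
  stage payoff g; with probability q the game is absorbed, and payoff w is received forever after.\<close>
definition shapley :: "nat \<Rightarrow> nat \<Rightarrow> (nat \<Rightarrow> nat \<Rightarrow> real) \<Rightarrow> (nat \<Rightarrow> nat \<Rightarrow> real) \<Rightarrow>
    (nat \<Rightarrow> nat \<Rightarrow> real) \<Rightarrow> real \<Rightarrow> real \<Rightarrow> real" where
  "shapley m n g q w l v =
     mval m n (\<lambda>i j. l * g i j + (1 - l) * (q i j * w i j + (1 - q i j) * v))"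

definition disc_val :: "nat \<Rightarrow> nat \<Rightarrow> (nat \<Rightarrow> nat \<Rightarrow> real) \<Rightarrow> (nat \<Rightarrow> nat \<Rightarrow> real) \<Rightarrow>
    (nat \<Rightarrow> nat \<Rightarrow> real) \<Rightarrow> real \<Rightarrow> real" where
  "disc_val m n g q w l = (THE v. v = shapley m n g q w l v)"

end

theory Submission
  imports Defs
begin

lemma ms_nonneg: "x \<in> mixed_strats k \<Longrightarrow> 0 \<le> x i"
  unfolding mixed_strats_def by (cases "i < k") auto

lemma ms_sum: "x \<in> mixed_strats k \<Longrightarrow> (\<Sum>i<k. x i) = 1"
  unfolding mixed_strats_def by auto

lemma bil_col: "bil m n A x y = (\<Sum>j<n. y j * (\<Sum>i<m. x i * A i j))"
  unfolding bil_def by (subst sum.swap) (simp add: sum_distrib_left algebra_simps)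

lemma bil_row: "bil m n A x y = (\<Sum>i<m. x i * (\<Sum>j<n. y j * A i j))"
  unfolding bil_def by (simp add: sum_distrib_left algebra_simps)

lemma conv_ge:
  assumes "y \<in> mixed_strats n" "\<forall>j<n. V \<le> c j"
  shows "V \<le> (\<Sum>j<n. y j * c j)"
proof -
  have "(\<Sum>j<n. y j * V) \<le> (\<Sum>j<n. y j * c j)"
    using assms by (intro sum_mono mult_left_mono) (auto intro: ms_nonneg)
  moreover have "(\<Sum>j<n. y j * V) = V" using ms_sum[OF assms(1)] by (simp add: sum_distrib_right[symmetric])
  ultimately show ?thesis by simp
qed

lemma conv_le:
  assumes "y \<in> mixed_strats n" "\<forall>j<n. c j \<le> V"
  shows "(\<Sum>j<n. y j * c j) \<le> V"
proof -
  have "(\<Sum>j<n. y j * c j) \<le> (\<Sum>j<n. y j * V)"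
    using assms by (intro sum_mono mult_left_mono) (auto intro: ms_nonneg)
  moreover have "(\<Sum>j<n. y j * V) = V" using ms_sum[OF assms(1)] by (simp add: sum_distrib_right[symmetric])
  ultimately show ?thesis by simp
qed

definition RA :: "nat \<Rightarrow> nat \<Rightarrow> (nat \<Rightarrow> nat \<Rightarrow> real) \<Rightarrow> real" where
  "RA m n A = (\<Sum>i<m. \<Sum>j<n. \<bar>A i j\<bar>)"

lemma RA_ge: "i < m \<Longrightarrow> j < n \<Longrightarrow> \<bar>A i j\<bar> \<le> RA m n A"
proof -
  assume a: "i < m" "j < n"
  have "\<bar>A i j\<bar> \<le> (\<Sum>j<n. \<bar>A i j\<bar>)" using a by (intro member_le_sum) auto
  also have "\<dots> \<le> RA m n A" unfolding RA_def using a
    by (intro member_le_sum[where f="\<lambda>i. \<Sum>j<n. \<bar>A i j\<bar>"]) (auto intro: sum_nonneg)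
  finally show ?thesis .
qed

lemma bil_bound:
  assumes "x \<in> mixed_strats m" "y \<in> mixed_strats n"
  shows "\<bar>bil m n A x y\<bar> \<le> RA m n A"
proof -
  have "\<forall>i<m. \<bar>\<Sum>j<n. y j * A i j\<bar> \<le> RA m n A"
  proof (intro allI impI)
    fix i assume i: "i < m"
    have "(\<Sum>j<n. y j * A i j) \<le> RA m n A"
      using RA_ge[OF i, of _ n A] by (intro conv_le[OF assms(2)]) (auto simp: abs_le_iff)
    moreover have "- RA m n A \<le> (\<Sum>j<n. y j * A i j)"
      using RA_ge[OF i, of _ n A] by (intro conv_ge[OF assms(2)]) (metis abs_le_D2 minus_le_iff)
    ultimately show "\<bar>\<Sum>j<n. y j * A i j\<bar> \<le> RA m n A" by auto
  qed
  then have "bil m n A x y \<le> RA m n A" "- RA m n A \<le> bil m n A x y"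
    unfolding bil_row by (auto intro!: conv_le[OF assms(1)] conv_ge[OF assms(1)] simp: abs_le_iff)
  then show ?thesis by auto
qed

lemma saddle:
  assumes x0: "x0 \<in> mixed_strats m" and y0: "y0 \<in> mixed_strats n"
    and c: "\<forall>j<n. V \<le> (\<Sum>i<m. x0 i * A i j)"
    and r: "\<forall>i<m. (\<Sum>j<n. y0 j * A i j) \<le> V"
  shows "mval m n A = V"
proof -
  have bb: "bdd_below ((\<lambda>y. bil m n A x y) ` mixed_strats n)" if "x \<in> mixed_strats m" for x
    using bil_bound[OF that, of _ n A] by (intro bdd_belowI[where m="- RA m n A"]) (metis abs_le_D2 minus_le_iff imageE)
  have up: "(INF y\<in>mixed_strats n. bil m n A x y) \<le> V" if xm: "x \<in> mixed_strats m" for x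
  proof -
    have "(INF y\<in>mixed_strats n. bil m n A x y) \<le> bil m n A x y0"
      by (rule cINF_lower[OF bb[OF xm] y0])
    also have "\<dots> \<le> V" unfolding bil_row using r by (intro conv_le[OF xm]) auto
    finally show ?thesis .
  qed
  have lo: "V \<le> (INF y\<in>mixed_strats n. bil m n A x0 y)"
  proof (rule cINF_greatest)
    show "mixed_strats n \<noteq> {}" using y0 by auto
    fix y assume "y \<in> mixed_strats n"
    then show "V \<le> bil m n A x0 y" unfolding bil_col using c by (intro conv_ge) auto
  qed
  have "mval m n A \<le> V" unfolding mval_def
    using x0 up by (intro cSUP_least) auto
  moreover have "V \<le> mval m n A" unfolding mval_def
    using lo x0 up by (intro order.trans[OF lo] cSUP_upper) (auto intro!: bdd_aboveI)
  ultimately show ?thesis by simp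
qed

lemma cont_Min_gen:
  fixes f :: "nat \<Rightarrow> real \<Rightarrow> real"
  assumes "\<And>k. continuous_on S (f k)"
  shows "n \<ge> 1 \<Longrightarrow> continuous_on S (\<lambda>t. Min ((\<lambda>k. f k t) ` {..<n}))"
proof (induction n)
  case 0 then show ?case by simp
next
  case (Suc n)
  show ?case
  proof (cases "n = 0")
    case True then show ?thesis using assms by (simp add: lessThan_Suc)
  next
    case False
    then have eq: "(\<lambda>t. Min ((\<lambda>k. f k t) ` {..<Suc n})) = (\<lambda>t. min (f n t) (Min ((\<lambda>k. f k t) ` {..<n})))"
      by (auto simp: lessThan_Suc intro!: ext Min_insert)
    show ?thesis unfolding eq using Suc False assms by (intro continuous_on_min) auto
  qed
qed

lemma oneD:
  fixes P Q :: "nat \<Rightarrow> real"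
  assumes n: "n \<ge> 1"
  shows "\<exists>t V. 0 \<le> t \<and> t \<le> 1 \<and> (\<forall>k<n. V \<le> t * P k + (1-t) * Q k) \<and>
    ((\<exists>k<n. P k \<le> V \<and> Q k \<le> V) \<or>
     (\<exists>j<n. \<exists>k<n. \<exists>s. 0 < s \<and> s < 1 \<and> 0 < t \<and> t < 1 \<and>
        t * P j + (1-t) * Q j = V \<and> t * P k + (1-t) * Q k = V \<and>
        s * P j + (1-s) * P k = V \<and> s * Q j + (1-s) * Q k = V))"
proof -
  define l where "l k t = t * P k + (1-t) * Q k" for k t
  define psi where "psi t = Min ((\<lambda>k. l k t) ` {..<n})" for t
  have fin: "finite ((\<lambda>k. l k t) ` {..<n})" for t by simp
  have ne: "(\<lambda>k. l k t) ` {..<n} \<noteq> {}" for t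
  proof -
    have "0 \<in> {..<n}" using n by simp
    then show ?thesis by blast
  qed
  have contl: "continuous_on S (l k)" for k S unfolding l_def by (intro continuous_intros)
  have cpsi: "continuous_on {0..1} psi" unfolding psi_def
    by (rule cont_Min_gen[OF contl n])
  obtain t0 where t0: "t0 \<in> {0..1}" and mx: "\<forall>t\<in>{0..1}. psi t \<le> psi t0"
    using continuous_attains_sup[OF compact_Icc _ cpsi] by auto
  define V where "V = psi t0"
  have geV: "\<forall>k<n. V \<le> l k t0" unfolding V_def psi_def using fin by (auto intro: Min_le)
  have maxm: "\<exists>k<n. l k t \<le> V" if "t \<in> {0..1}" for t
  proof -
    have "psi t \<in> (\<lambda>k. l k t) ` {..<n}" unfolding psi_def using fin ne by (rule Min_in)
    then obtain k where "k < n" "psi t = l k t" by auto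
    moreover have "psi t \<le> psi t0" using mx that by blast
    ultimately show ?thesis unfolding V_def by (intro exI[of _ k]) auto
  qed
  have tend: "((\<lambda>t. l k t) \<longlongrightarrow> l k t0) F" if "F \<le> nhds t0" for k F
    unfolding l_def by (rule tendsto_mono[OF that]) (intro tendsto_intros filterlim_ident)
  have claimR: "\<exists>k<n. l k t0 = V \<and> P k \<le> Q k" if t01: "t0 < 1"
  proof (rule ccontr)
    assume "\<not> ?thesis"
    then have act: "\<forall>k<n. l k t0 = V \<longrightarrow> Q k < P k" by auto
    have ev: "\<forall>k\<in>{..<n}. eventually (\<lambda>t. V < l k t) (at_right t0)"
    proof
      fix k assume k: "k \<in> {..<n}"
      show "eventually (\<lambda>t. V < l k t) (at_right t0)"
      proof (cases "l k t0 = V")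
        case True
        then have "Q k < P k" using act k by auto
        moreover have "l k t = V + (t - t0) * (P k - Q k)" for t
          using True unfolding l_def by (simp add: algebra_simps)
        ultimately show ?thesis
          by (auto simp: eventually_at_right[of t0 "t0+1"] intro!: exI[of _ "t0+1"])
      next
        case False
        then have "V < l k t0" using geV k by force
        then show ?thesis using tend[of "at_right t0" k] by (auto intro: order_tendstoD at_within_le_nhds)
      qed
    qed
    have "eventually (\<lambda>t. \<forall>k\<in>{..<n}. V < l k t) (at_right t0)"
      by (rule eventually_ball_finite[OF _ ev]) simp
    moreover have "eventually (\<lambda>t. t0 < t \<and> t < 1) (at_right t0)"
      using t01 by (auto simp: eventually_at_right[of t0 1] intro!: exI[of _ 1])
    ultimately have evt: "eventually (\<lambda>t. (\<forall>k\<in>{..<n}. V < l k t) \<and> t0 < t \<and> t < 1) (at_right t0)"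
      by (rule eventually_conj)
    obtain t where "\<forall>k\<in>{..<n}. V < l k t" "t0 < t" "t < 1"
      using eventually_happens[OF evt] trivial_limit_at_right_real by blast
    moreover then have "t \<in> {0..1}" using t0 by auto
    ultimately show False using maxm[of t] by (metis lessThan_iff not_le)
  qed
  have claimL: "\<exists>k<n. l k t0 = V \<and> Q k \<le> P k" if t01: "0 < t0"
  proof (rule ccontr)
    assume "\<not> ?thesis"
    then have act: "\<forall>k<n. l k t0 = V \<longrightarrow> P k < Q k" by auto
    have ev: "\<forall>k\<in>{..<n}. eventually (\<lambda>t. V < l k t) (at_left t0)"
    proof
      fix k assume k: "k \<in> {..<n}"
      show "eventually (\<lambda>t. V < l k t) (at_left t0)"
      proof (cases "l k t0 = V")
        case True
        then have "P k < Q k" using act k by auto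
        moreover have "l k t = V + (t0 - t) * (Q k - P k)" for t
          using True unfolding l_def by (simp add: algebra_simps)
        ultimately show ?thesis
          by (auto simp: eventually_at_left[of "t0 - 1" t0] intro!: exI[of _ "t0 - 1"])
      next
        case False
        then have "V < l k t0" using geV k by force
        then show ?thesis using tend[of "at_left t0" k] by (auto intro: order_tendstoD at_within_le_nhds)
      qed
    qed
    have "eventually (\<lambda>t. \<forall>k\<in>{..<n}. V < l k t) (at_left t0)"
      by (rule eventually_ball_finite[OF _ ev]) simp
    moreover have "eventually (\<lambda>t. 0 < t \<and> t < t0) (at_left t0)"
      using t01 by (auto simp: eventually_at_left[of 0 t0] intro!: exI[of _ 0])
    ultimately have evt: "eventually (\<lambda>t. (\<forall>k\<in>{..<n}. V < l k t) \<and> 0 < t \<and> t < t0) (at_left t0)"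
      by (rule eventually_conj)
    obtain t where "\<forall>k\<in>{..<n}. V < l k t" "0 < t" "t < t0"
      using eventually_happens[OF evt] trivial_limit_at_left_real by blast
    moreover then have "t \<in> {0..1}" using t0 by auto
    ultimately show False using maxm[of t] by (metis lessThan_iff not_le)
  qed
  have geV': "\<forall>k<n. V \<le> t0 * P k + (1-t0) * Q k" using geV unfolding l_def by auto
  have disj: "(\<exists>k<n. P k \<le> V \<and> Q k \<le> V) \<or>
     (\<exists>j<n. \<exists>k<n. \<exists>s. 0 < s \<and> s < 1 \<and> 0 < t0 \<and> t0 < 1 \<and>
        t0 * P j + (1-t0) * Q j = V \<and> t0 * P k + (1-t0) * Q k = V \<and>
        s * P j + (1-s) * P k = V \<and> s * Q j + (1-s) * Q k = V)" (is "?A \<or> ?B")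
  proof (cases "t0 = 0")
    case True
    then obtain k where k: "k<n" "l k t0 = V" "P k \<le> Q k" using claimR by auto
    then have "Q k = V" using True unfolding l_def by simp
    then have "?A" using k by (intro exI[of _ k]) auto
    then show ?thesis by (rule disjI1)
  next
    case F0: False
    show ?thesis
    proof (cases "t0 = 1")
      case True
      then obtain k where k: "k<n" "l k t0 = V" "Q k \<le> P k" using claimL by auto
      then have "P k = V" using True unfolding l_def by simp
      then have "?A" using k by (intro exI[of _ k]) auto
      then show ?thesis by (rule disjI1)
    next
      case F1: False
      then have tt: "0 < t0" "t0 < 1" using F0 t0 by auto
      obtain j where j: "j<n" "l j t0 = V" "P j \<le> Q j" using claimR tt by auto
      obtain k where k: "k<n" "l k t0 = V" "Q k \<le> P k" using claimL tt by auto
      show ?thesis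
      proof (cases "P j = Q j \<or> P k = Q k")
        case True
        have "?A"
        proof (cases "P j = Q j")
          case True
          then have "l j t0 = P j" unfolding l_def by (simp add: algebra_simps)
          then show ?thesis using j True by (intro exI[of _ j]) auto
        next
          case False
          then have PQ: "P k = Q k" using True by auto
          then have "l k t0 = P k" unfolding l_def by (simp add: algebra_simps)
          then show ?thesis using k PQ by (intro exI[of _ k]) auto
        qed
        then show ?thesis by (rule disjI1)
      next
        case False
        then have dj: "P j < Q j" and dk: "Q k < P k" using j k by auto
        define a where "a = P k - Q k"
        define b where "b = Q j - P j"
        have a: "a > 0" and b: "b > 0" using dj dk unfolding a_def b_def by auto
        define s where "s = a / (a + b)"
        have s01: "0 < s" "s < 1" unfolding s_def using a b by (auto simp: divide_less_eq)
        have sd: "s * (P j - Q j) + (1 - s) * (P k - Q k) = 0"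
        proof -
          have h1: "1 - s = b / (a + b)" unfolding s_def using a b by (simp add: field_simps)
          have "s * (P j - Q j) + (1 - s) * (P k - Q k) = (1 - s) * a - s * b"
            unfolding a_def b_def by (simp add: algebra_simps)
          also have "\<dots> = b / (a + b) * a - a / (a + b) * b" unfolding h1 unfolding s_def ..
          also have "\<dots> = 0" by simp
          finally show ?thesis .
        qed
        have Pj: "P j = V + (1 - t0) * (P j - Q j)" and Pk: "P k = V + (1 - t0) * (P k - Q k)"
          using j(2) k(2) unfolding l_def by (simp_all add: algebra_simps)
        have e1: "s * P j + (1-s) * P k = V"
        proof -
          have "s * P j + (1-s) * P k = s * (V + (1 - t0) * (P j - Q j)) + (1-s) * (V + (1 - t0) * (P k - Q k))"
            using Pj Pk by simp
          also have "\<dots> = V + (1 - t0) * (s * (P j - Q j) + (1 - s) * (P k - Q k))"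
            by (simp add: algebra_simps)
          finally show ?thesis using sd by simp
        qed
        have e2: "s * Q j + (1-s) * Q k = V"
        proof -
          have "s * Q j + (1-s) * Q k = (s * P j + (1-s) * P k) - (s * (P j - Q j) + (1 - s) * (P k - Q k))"
            by (simp add: algebra_simps)
          then show ?thesis using sd e1 by simp
        qed
        have jj: "t0 * P j + (1-t0) * Q j = V" and kk: "t0 * P k + (1-t0) * Q k = V"
          using j(2) k(2) unfolding l_def by auto
        have "?B"
          apply (rule exI[of _ j], rule conjI[OF j(1)])
          apply (rule exI[of _ k], rule conjI[OF k(1)])
          apply (rule exI[of _ s])
          using s01 tt e1 e2 jj kk by simp
        then show ?thesis by (rule disjI2)
      qed
    qed
  qed
  show ?thesis
    apply (rule exI[of _ t0], rule exI[of _ V])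
    using t0 geV' disj by simp
qed

definition equalz :: "(nat \<Rightarrow> nat \<Rightarrow> real) \<Rightarrow> nat \<Rightarrow> nat \<Rightarrow> nat \<Rightarrow> nat \<Rightarrow> real \<Rightarrow> bool" where
  "equalz A i k j l V \<longleftrightarrow> (\<exists>t s. 0 < t \<and> t < 1 \<and> 0 < s \<and> s < 1 \<and>
     t * A i j + (1-t) * A k j = V \<and> t * A i l + (1-t) * A k l = V \<and>
     s * A i j + (1-s) * A i l = V \<and> s * A k j + (1-s) * A k l = V)"

definition x2 :: "real \<Rightarrow> nat \<Rightarrow> nat \<Rightarrow> nat \<Rightarrow> real" where
  "x2 t a b i = (if i = a then t else 0) + (if i = b then 1 - t else 0)"

lemma x2_in: "a < m \<Longrightarrow> b < m \<Longrightarrow> 0 \<le> t \<Longrightarrow> t \<le> 1 \<Longrightarrow> x2 t a b \<in> mixed_strats m"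
  unfolding mixed_strats_def x2_def by (auto simp: sum.distrib)

lemma x2_sum: "a < m \<Longrightarrow> b < m \<Longrightarrow> (\<Sum>i<m. x2 t a b i * c i) = t * c a + (1 - t) * c b"
  unfolding x2_def by (simp add: ring_distribs sum.distrib if_distrib[of "\<lambda>x. x * _"] cong: if_cong)

lemma conv_strict:
  fixes t a b V :: real
  assumes "0 \<le> t" "t \<le> 1" "a < V" "b < V"
  shows "t * a + (1-t) * b < V"
proof (cases "t = 0")
  case True then show ?thesis using assms by simp
next
  case False
  then have "t * a < t * V" using assms by (intro mult_strict_left_mono) auto
  moreover have "(1-t) * b \<le> (1-t) * V" using assms by (intro mult_left_mono) auto
  ultimately have "t * a + (1-t) * b < t * V + (1-t) * V" by linarith
  then show ?thesis by (simp add: algebra_simps)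
qed

definition STRUCT :: "nat \<Rightarrow> nat \<Rightarrow> (nat \<Rightarrow> nat \<Rightarrow> real) \<Rightarrow> real \<Rightarrow> bool" where
  "STRUCT m n A V \<longleftrightarrow> (\<exists>i<m. \<exists>j<n. A i j = V) \<or> (\<exists>i<m. \<exists>k<m. \<exists>j<n. \<exists>l<n. equalz A i k j l V)"

definition SADDLE :: "nat \<Rightarrow> nat \<Rightarrow> (nat \<Rightarrow> nat \<Rightarrow> real) \<Rightarrow> real \<Rightarrow> bool" where
  "SADDLE m n A V \<longleftrightarrow> (\<exists>x0\<in>mixed_strats m. \<exists>y0\<in>mixed_strats n.
     (\<forall>j<n. V \<le> (\<Sum>i<m. x0 i * A i j)) \<and> (\<forall>i<m. (\<Sum>j<n. y0 j * A i j) \<le> V))"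

lemma struct_rows:
  assumes m: "1 \<le> m" "m \<le> 2" and n: "1 \<le> n"
  shows "\<exists>V. SADDLE m n A V \<and> STRUCT m n A V"
proof -
  define P where "P j = A 0 j" for j
  define Q where "Q j = A (m-1) j" for j
  have rows: "i = 0 \<or> i = m - 1" if "i < m" for i using that m by auto
  obtain t V where t: "0 \<le> t" "t \<le> 1" and ge: "\<forall>k<n. V \<le> t * P k + (1-t) * Q k"
    and alt: "(\<exists>k<n. P k \<le> V \<and> Q k \<le> V) \<or>
     (\<exists>j<n. \<exists>k<n. \<exists>s. 0 < s \<and> s < 1 \<and> 0 < t \<and> t < 1 \<and>
        t * P j + (1-t) * Q j = V \<and> t * P k + (1-t) * Q k = V \<and>
        s * P j + (1-s) * P k = V \<and> s * Q j + (1-s) * Q k = V)"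
    using oneD[OF n, of P Q] by blast
  have m0: "0 < m" "m - 1 < m" using m by auto
  have xin: "x2 t 0 (m-1) \<in> mixed_strats m" by (rule x2_in[OF m0 t])
  have xs: "(\<Sum>i<m. x2 t 0 (m-1) i * A i j) = t * A 0 j + (1-t) * A (m-1) j" for j
    by (rule x2_sum[OF m0])
  have cols: "\<forall>j<n. V \<le> (\<Sum>i<m. x2 t 0 (m-1) i * A i j)"
    using ge unfolding P_def Q_def xs by simp
  from alt show ?thesis
  proof
    assume "\<exists>k<n. P k \<le> V \<and> Q k \<le> V"
    then obtain k where k: "k < n" "P k \<le> V" "Q k \<le> V" by auto
    have yin: "x2 1 k k \<in> mixed_strats n" by (rule x2_in) (use k in auto)
    have rowc: "\<forall>i<m. (\<Sum>j<n. x2 1 k k j * A i j) \<le> V"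
      using k rows unfolding P_def Q_def by (auto simp: x2_sum)
    have "SADDLE m n A V" unfolding SADDLE_def using xin yin cols rowc by blast
    moreover have "P k = V \<or> Q k = V"
    proof (rule ccontr)
      assume "\<not> ?thesis"
      then have "P k < V" "Q k < V" using k by auto
      then have "t * P k + (1-t) * Q k < V" using t by (intro conv_strict) auto
      then show False using ge k by force
    qed
    then have "STRUCT m n A V" unfolding STRUCT_def P_def Q_def using k m0 by blast
    ultimately show ?thesis by blast
  next
    assume "\<exists>j<n. \<exists>k<n. \<exists>s. 0 < s \<and> s < 1 \<and> 0 < t \<and> t < 1 \<and>
        t * P j + (1-t) * Q j = V \<and> t * P k + (1-t) * Q k = V \<and>
        s * P j + (1-s) * P k = V \<and> s * Q j + (1-s) * Q k = V"
    then obtain j k s where jk: "j < n" "k < n" "0 < s" "s < 1" "0 < t" "t < 1"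
        "t * P j + (1-t) * Q j = V" "t * P k + (1-t) * Q k = V"
        "s * P j + (1-s) * P k = V" "s * Q j + (1-s) * Q k = V" by blast
    have yin: "x2 s j k \<in> mixed_strats n" by (rule x2_in) (use jk in auto)
    have ri: "s * A i j + (1-s) * A i k = V" if "i < m" for i
    proof -
      have "i = 0 \<or> i = m - 1" by (rule rows[OF that])
      then show ?thesis using jk unfolding P_def Q_def by auto
    qed
    have rowc: "\<forall>i<m. (\<Sum>l<n. x2 s j k l * A i l) \<le> V"
      using jk ri by (auto simp: x2_sum)
    have "SADDLE m n A V" unfolding SADDLE_def using xin yin cols rowc by blast
    moreover have "equalz A 0 (m-1) j k V" unfolding equalz_def
      using jk unfolding P_def Q_def by blast
    then have "STRUCT m n A V" unfolding STRUCT_def using jk m0 by blast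
    ultimately show ?thesis by blast
  qed
qed

lemma struct_cols:
  assumes n: "1 \<le> n" "n \<le> 2" and m: "1 \<le> m"
  shows "\<exists>V. SADDLE m n A V \<and> STRUCT m n A V"
proof -
  define P where "P i = - A i 0" for i
  define Q where "Q i = - A i (n-1)" for i
  have cls: "j = 0 \<or> j = n - 1" if "j < n" for j using that n by auto
  obtain t V where t: "0 \<le> t" "t \<le> 1" and ge: "\<forall>k<m. V \<le> t * P k + (1-t) * Q k"
    and alt: "(\<exists>k<m. P k \<le> V \<and> Q k \<le> V) \<or>
     (\<exists>j<m. \<exists>k<m. \<exists>s. 0 < s \<and> s < 1 \<and> 0 < t \<and> t < 1 \<and>
        t * P j + (1-t) * Q j = V \<and> t * P k + (1-t) * Q k = V \<and>
        s * P j + (1-s) * P k = V \<and> s * Q j + (1-s) * Q k = V)"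
    using oneD[OF m, of P Q] by blast
  have n0: "0 < n" "n - 1 < n" using n by auto
  have yin: "x2 t 0 (n-1) \<in> mixed_strats n" by (rule x2_in[OF n0 t])
  have xs: "(\<Sum>j<n. x2 t 0 (n-1) j * A i j) = t * A i 0 + (1-t) * A i (n-1)" for i
    by (rule x2_sum[OF n0])
  have rowc: "\<forall>i<m. (\<Sum>j<n. x2 t 0 (n-1) j * A i j) \<le> - V"
    using ge unfolding P_def Q_def xs by (auto simp: algebra_simps)
  from alt show ?thesis
  proof
    assume "\<exists>k<m. P k \<le> V \<and> Q k \<le> V"
    then obtain k where k: "k < m" "P k \<le> V" "Q k \<le> V" by auto
    have xin: "x2 1 k k \<in> mixed_strats m" by (rule x2_in) (use k in auto)
    have ak: "- V \<le> A k j" if "j < n" for j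
    proof -
      have "j = 0 \<or> j = n - 1" by (rule cls[OF that])
      then show ?thesis using k unfolding P_def Q_def by auto
    qed
    have cols: "\<forall>j<n. - V \<le> (\<Sum>i<m. x2 1 k k i * A i j)"
      using k ak by (auto simp: x2_sum)
    have "SADDLE m n A (- V)" unfolding SADDLE_def using xin yin cols rowc by blast
    moreover have "P k = V \<or> Q k = V"
    proof (rule ccontr)
      assume "\<not> ?thesis"
      then have "P k < V" "Q k < V" using k by auto
      then have "t * P k + (1-t) * Q k < V" using t by (intro conv_strict) auto
      then show False using ge k by force
    qed
    then have "A k 0 = - V \<or> A k (n-1) = - V" unfolding P_def Q_def by auto
    then have "STRUCT m n A (- V)" unfolding STRUCT_def using k n0 by blast
    ultimately show ?thesis by blast
  next
    assume "\<exists>j<m. \<exists>k<m. \<exists>s. 0 < s \<and> s < 1 \<and> 0 < t \<and> t < 1 \<and>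
        t * P j + (1-t) * Q j = V \<and> t * P k + (1-t) * Q k = V \<and>
        s * P j + (1-s) * P k = V \<and> s * Q j + (1-s) * Q k = V"
    then obtain j k s where jk: "j < m" "k < m" "0 < s" "s < 1" "0 < t" "t < 1"
        "t * P j + (1-t) * Q j = V" "t * P k + (1-t) * Q k = V"
        "s * P j + (1-s) * P k = V" "s * Q j + (1-s) * Q k = V" by blast
    have xin: "x2 s j k \<in> mixed_strats m" by (rule x2_in) (use jk in auto)
    have e: "s * A j 0 + (1-s) * A k 0 = - V" "s * A j (n-1) + (1-s) * A k (n-1) = - V"
         "t * A j 0 + (1-t) * A j (n-1) = - V" "t * A k 0 + (1-t) * A k (n-1) = - V"
      using jk(7-10) unfolding P_def Q_def by (simp_all add: algebra_simps)
    have ci: "s * A j l + (1-s) * A k l = - V" if "l < n" for l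
    proof -
      have "l = 0 \<or> l = n - 1" by (rule cls[OF that])
      then show ?thesis using e by auto
    qed
    have cols: "\<forall>l<n. - V \<le> (\<Sum>i<m. x2 s j k i * A i l)"
      using ci by (auto simp: x2_sum[OF jk(1,2)])
    have "SADDLE m n A (- V)" unfolding SADDLE_def using xin yin cols rowc by blast
    moreover have "equalz A j k 0 (n-1) (- V)" unfolding equalz_def
      using jk(3-6) e by blast
    then have "STRUCT m n A (- V)" unfolding STRUCT_def using jk n0 by blast
    ultimately show ?thesis by blast
  qed
qed

lemma mval_struct:
  assumes "1 \<le> m" "1 \<le> n" "min m n < 3"
  shows "SADDLE m n A (mval m n A) \<and> STRUCT m n A (mval m n A)"
proof -
  obtain V where V: "SADDLE m n A V" "STRUCT m n A V"
  proof (cases "m \<le> 2")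
    case True then show ?thesis using struct_rows[of m n A] assms that by blast
  next
    case False then have "n \<le> 2" using assms by simp
    then show ?thesis using struct_cols[of n m A] assms that by blast
  qed
  then have "mval m n A = V" unfolding SADDLE_def using saddle by blast
  then show ?thesis using V by simp
qed

definition OK :: "nat \<Rightarrow> nat \<Rightarrow> bool" where
  "OK m n \<longleftrightarrow> 1 \<le> m \<and> 1 \<le> n \<and> min m n < 3"

lemma mval_mono:
  assumes ok: "OK m n" and le: "\<forall>i<m. \<forall>j<n. A i j \<le> B i j + d"
  shows "mval m n A \<le> mval m n B + d"
proof -
  have sA: "SADDLE m n A (mval m n A)" and sB: "SADDLE m n B (mval m n B)"
    using mval_struct ok unfolding OK_def by auto
  obtain xA where xA: "xA \<in> mixed_strats m" "\<forall>j<n. mval m n A \<le> (\<Sum>i<m. xA i * A i j)"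
    using sA unfolding SADDLE_def by blast
  obtain yB where yB: "yB \<in> mixed_strats n" "\<forall>i<m. (\<Sum>j<n. yB j * B i j) \<le> mval m n B"
    using sB unfolding SADDLE_def by blast
  have row: "(\<Sum>j<n. yB j * A i j) \<le> mval m n B + d" if i: "i < m" for i
  proof -
    have "(\<Sum>j<n. yB j * A i j) \<le> (\<Sum>j<n. yB j * (B i j + d))"
      using le i yB(1) by (intro sum_mono mult_left_mono) (auto intro: ms_nonneg)
    also have "\<dots> = (\<Sum>j<n. yB j * B i j) + d"
      using ms_sum[OF yB(1)] by (simp add: ring_distribs sum.distrib sum_distrib_right[symmetric])
    finally show ?thesis using yB(2) i by force
  qed
  have "mval m n A \<le> bil m n A xA yB" unfolding bil_col using xA by (intro conv_ge[OF yB(1)]) auto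
  also have "\<dots> \<le> mval m n B + d" unfolding bil_row using row by (intro conv_le[OF xA(1)]) auto
  finally show ?thesis .
qed

lemma mval_ge:
  assumes ok: "OK m n" and le: "\<forall>i<m. \<forall>j<n. c \<le> A i j"
  shows "c \<le> mval m n A"
proof -
  have sA: "SADDLE m n A (mval m n A)" using mval_struct ok unfolding OK_def by auto
  obtain y where y: "y \<in> mixed_strats n" "\<forall>i<m. (\<Sum>j<n. y j * A i j) \<le> mval m n A"
    using sA unfolding SADDLE_def by blast
  have "c \<le> (\<Sum>j<n. y j * A 0 j)" using le ok unfolding OK_def by (intro conv_ge[OF y(1)]) auto
  then show ?thesis using y(2) ok unfolding OK_def by force
qed

lemma mval_le:
  assumes ok: "OK m n" and le: "\<forall>i<m. \<forall>j<n. A i j \<le> c"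
  shows "mval m n A \<le> c"
proof -
  have sA: "SADDLE m n A (mval m n A)" using mval_struct ok unfolding OK_def by auto
  obtain x where x: "x \<in> mixed_strats m" "\<forall>j<n. mval m n A \<le> (\<Sum>i<m. x i * A i j)"
    using sA unfolding SADDLE_def by blast
  have "(\<Sum>i<m. x i * A i 0) \<le> c" using le ok unfolding OK_def by (intro conv_le[OF x(1)]) auto
  then show ?thesis using x(2) ok unfolding OK_def by force
qed

lemma mval_shift:
  assumes ok: "OK m n"
  shows "mval m n (\<lambda>i j. A i j - v) = mval m n A - v"
proof -
  have "mval m n (\<lambda>i j. A i j - v) \<le> mval m n A + (- v)" by (rule mval_mono[OF ok]) auto
  moreover have "mval m n A \<le> mval m n (\<lambda>i j. A i j - v) + v" by (rule mval_mono[OF ok]) auto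
  ultimately show ?thesis by simp
qed

definition Amat :: "(nat \<Rightarrow> nat \<Rightarrow> real) \<Rightarrow> (nat \<Rightarrow> nat \<Rightarrow> real) \<Rightarrow> (nat \<Rightarrow> nat \<Rightarrow> real) \<Rightarrow> real \<Rightarrow> real \<Rightarrow> nat \<Rightarrow> nat \<Rightarrow> real" where
  "Amat g q w l v i j = l * g i j + (1-l) * (q i j * w i j + (1 - q i j) * v)"

lemma shapley_Amat: "shapley m n g q w l v = mval m n (Amat g q w l v)"
  unfolding shapley_def Amat_def by simp

definition Rb :: "nat \<Rightarrow> nat \<Rightarrow> (nat \<Rightarrow> nat \<Rightarrow> real) \<Rightarrow> (nat \<Rightarrow> nat \<Rightarrow> real) \<Rightarrow> real" where
  "Rb m n g w = (\<Sum>i<m. \<Sum>j<n. \<bar>g i j\<bar> + \<bar>w i j\<bar>)"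

lemma Rb_ge: assumes "i < m" "j < n" shows "\<bar>g i j\<bar> \<le> Rb m n g w" "\<bar>w i j\<bar> \<le> Rb m n g w"
proof -
  have "\<bar>g i j\<bar> + \<bar>w i j\<bar> \<le> (\<Sum>j<n. \<bar>g i j\<bar> + \<bar>w i j\<bar>)" using assms by (intro member_le_sum) auto
  also have "\<dots> \<le> Rb m n g w" unfolding Rb_def using assms
    by (intro member_le_sum[where f="\<lambda>i. \<Sum>j<n. \<bar>g i j\<bar> + \<bar>w i j\<bar>"]) (auto intro: sum_nonneg)
  finally show "\<bar>g i j\<bar> \<le> Rb m n g w" "\<bar>w i j\<bar> \<le> Rb m n g w" by auto
qed

lemma conv_abs:
  fixes l x y R :: real
  assumes "0 \<le> l" "l \<le> 1" "\<bar>x\<bar> \<le> R" "\<bar>y\<bar> \<le> R"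
  shows "\<bar>l * x + (1-l) * y\<bar> \<le> R"
proof -
  have "-R \<le> x" "-R \<le> y" "x \<le> R" "y \<le> R" using assms by auto
  then have "l * x \<le> l * R" "(1-l) * y \<le> (1-l) * R" "l * (-R) \<le> l * x" "(1-l) * (-R) \<le> (1-l) * y"
    using assms by (metis diff_ge_0_iff_ge mult_left_mono)+
  then have "l * x + (1-l) * y \<le> R" "-R \<le> l * x + (1-l) * y" by (simp_all add: algebra_simps)
  then show ?thesis by auto
qed

lemma Amat_bound:
  assumes q01: "\<forall>i<m. \<forall>j<n. q i j = 0 \<or> q i j = 1" and ij: "i < m" "j < n"
    and l: "0 \<le> l" "l \<le> 1" and v: "\<bar>v\<bar> \<le> Rb m n g w"
  shows "\<bar>Amat g q w l v i j\<bar> \<le> Rb m n g w"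
proof -
  have g: "\<bar>g i j\<bar> \<le> Rb m n g w" and w: "\<bar>w i j\<bar> \<le> Rb m n g w"
    using Rb_ge[OF ij, where g=g and w=w] by auto
  have "q i j = 0 \<or> q i j = 1" using q01 ij by auto
  then show ?thesis
  proof
    assume "q i j = 0" then show ?thesis unfolding Amat_def using g v l by (simp add: conv_abs)
  next
    assume "q i j = 1" then show ?thesis unfolding Amat_def using g w l by (simp add: conv_abs)
  qed
qed

lemma Rb_nonneg: "0 \<le> Rb m n g w" unfolding Rb_def by (intro sum_nonneg) auto

lemma shap_lip:
  assumes ok: "OK m n" and q01: "\<forall>i<m. \<forall>j<n. q i j = 0 \<or> q i j = 1" and l: "0 \<le> l" "l \<le> 1"
  shows "shapley m n g q w l a \<le> shapley m n g q w l b + (1-l) * \<bar>a - b\<bar>"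
  unfolding shapley_Amat
proof (rule mval_mono[OF ok], intro allI impI)
  fix i j assume ij: "i < m" "j < n"
  have "(1-l) * (a - b) \<le> (1-l) * \<bar>a - b\<bar>" using l by (intro mult_left_mono) auto
  moreover have "q i j = 0 \<or> q i j = 1" using q01 ij by auto
  moreover have "0 \<le> (1-l) * \<bar>a - b\<bar>" using l by simp
  ultimately show "Amat g q w l a i j \<le> Amat g q w l b i j + (1 - l) * \<bar>a - b\<bar>"
    unfolding Amat_def using l by (auto simp: algebra_simps)
qed

lemma shap_cont:
  assumes ok: "OK m n" and q01: "\<forall>i<m. \<forall>j<n. q i j = 0 \<or> q i j = 1" and l: "0 \<le> l" "l \<le> 1"
  shows "continuous_on S (\<lambda>v. shapley m n g q w l v - v)"
  unfolding continuous_on_iff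
proof (intro ballI allI impI)
  fix x e assume x: "x \<in> S" and e: "(0::real) < e"
  show "\<exists>d>0. \<forall>x'\<in>S. dist x' x < d \<longrightarrow> dist (shapley m n g q w l x' - x') (shapley m n g q w l x - x) < e"
  proof (intro exI[of _ "e/2"] conjI ballI impI)
    show "0 < e/2" using e by simp
    fix x' assume "x' \<in> S" "dist x' x < e/2"
    then have d: "\<bar>x' - x\<bar> < e/2" by (simp add: dist_real_def)
    have a: "shapley m n g q w l x' \<le> shapley m n g q w l x + (1-l) * \<bar>x' - x\<bar>"
      by (rule shap_lip[OF ok q01 l])
    have b: "shapley m n g q w l x \<le> shapley m n g q w l x' + (1-l) * \<bar>x - x'\<bar>"
      by (rule shap_lip[OF ok q01 l])
    have c: "(1-l) * \<bar>x' - x\<bar> \<le> \<bar>x' - x\<bar>" using l by (simp add: mult_left_le_one_le)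
    have b2: "shapley m n g q w l x \<le> shapley m n g q w l x' + (1-l) * \<bar>x' - x\<bar>"
      using b by (simp add: abs_minus_commute)
    have f: "x' - x \<le> \<bar>x' - x\<bar>" "x - x' \<le> \<bar>x' - x\<bar>" by auto
    show "dist (shapley m n g q w l x' - x') (shapley m n g q w l x - x) < e"
      unfolding dist_real_def abs_less_iff using a b2 c d f by linarith
  qed
qed

lemma fix_unique:
  assumes ok: "OK m n" and q01: "\<forall>i<m. \<forall>j<n. q i j = 0 \<or> q i j = 1" and l: "0 < l" "l \<le> 1"
    and a: "a = shapley m n g q w l a" and b: "b = shapley m n g q w l b"
  shows "a = b"
proof -
  have l0: "0 \<le> l" using l by simp
  have "a \<le> b + (1-l) * \<bar>a - b\<bar>" using shap_lip[OF ok q01 l0 l(2), where a=a and b=b and g=g and w=w] a b by simp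
  moreover have "b \<le> a + (1-l) * \<bar>b - a\<bar>" using shap_lip[OF ok q01 l0 l(2), where a=b and b=a and g=g and w=w] a b by simp
  ultimately have "\<bar>a - b\<bar> \<le> (1-l) * \<bar>a - b\<bar>" by (simp add: abs_minus_commute abs_le_iff)
  then have "l * \<bar>a - b\<bar> \<le> 0" by (simp add: algebra_simps)
  then have "\<bar>a - b\<bar> \<le> 0" using l by (simp add: mult_le_0_iff)
  then show ?thesis by simp
qed

lemma fix_exists:
  assumes ok: "OK m n" and q01: "\<forall>i<m. \<forall>j<n. q i j = 0 \<or> q i j = 1" and l: "0 < l" "l \<le> 1"
  shows "\<exists>v. \<bar>v\<bar> \<le> Rb m n g w \<and> v = shapley m n g q w l v"
proof -
  define R where "R = Rb m n g w"
  have R0: "0 \<le> R" unfolding R_def by (rule Rb_nonneg)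
  have l0: "0 \<le> l" using l by simp
  have bd: "\<forall>i<m. \<forall>j<n. \<bar>Amat g q w l v i j\<bar> \<le> R" if "\<bar>v\<bar> \<le> R" for v
    using Amat_bound[OF q01 _ _ l0 l(2)] that unfolding R_def by blast
  have h1: "0 \<le> shapley m n g q w l (- R) - (- R)"
  proof -
    have "\<forall>i<m. \<forall>j<n. - R \<le> Amat g q w l (- R) i j" using bd[of "- R"] R0 by (metis abs_le_D2 abs_minus_cancel abs_of_nonneg minus_le_iff order_refl)
    then have "- R \<le> shapley m n g q w l (- R)" unfolding shapley_Amat by (rule mval_ge[OF ok])
    then show ?thesis by simp
  qed
  have h2: "shapley m n g q w l R - R \<le> 0"
  proof -
    have "\<forall>i<m. \<forall>j<n. Amat g q w l R i j \<le> R" using bd[of R] R0 by (simp add: abs_le_iff)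
    then have "shapley m n g q w l R \<le> R" unfolding shapley_Amat by (rule mval_le[OF ok])
    then show ?thesis by simp
  qed
  have "\<exists>x\<ge>- R. x \<le> R \<and> shapley m n g q w l x - x = 0"
    by (rule IVT2'[where f="\<lambda>v. shapley m n g q w l v - v", OF h2 h1]) (use R0 shap_cont[OF ok q01 l0 l(2)] in auto)
  then obtain v where "- R \<le> v" "v \<le> R" "shapley m n g q w l v - v = 0" by blast
  then show ?thesis unfolding R_def by (intro exI[of _ v]) auto
qed

lemma disc_val_props:
  assumes ok: "OK m n" and q01: "\<forall>i<m. \<forall>j<n. q i j = 0 \<or> q i j = 1" and l: "0 < l" "l \<le> 1"
  shows "\<bar>disc_val m n g q w l\<bar> \<le> Rb m n g w \<and> disc_val m n g q w l = shapley m n g q w l (disc_val m n g q w l)"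
proof -
  obtain v where v: "\<bar>v\<bar> \<le> Rb m n g w" "v = shapley m n g q w l v" using fix_exists[OF ok q01 l] by blast
  have "disc_val m n g q w l = v" unfolding disc_val_def
  proof (rule the_equality)
    show "v = shapley m n g q w l v" by (rule v(2))
    fix x assume "x = shapley m n g q w l x"
    then show "x = v" using fix_unique[OF ok q01 l] v(2) by blast
  qed
  then show ?thesis using v by simp
qed

lemma disc_zero:
  assumes ok: "OK m n" and q01: "\<forall>i<m. \<forall>j<n. q i j = 0 \<or> q i j = 1" and l: "0 < l" "l \<le> 1"
  shows "mval m n (\<lambda>i j. Amat g q w l (disc_val m n g q w l) i j - disc_val m n g q w l) = 0"
proof -
  define v where "v = disc_val m n g q w l"
  have "v = mval m n (Amat g q w l v)" using disc_val_props[OF ok q01 l] unfolding v_def shapley_Amat by blast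
  then have "mval m n (\<lambda>i j. Amat g q w l v i j - v) = 0" unfolding mval_shift[OF ok] by linarith
  then show ?thesis unfolding v_def .
qed

lemma diff_bound:
  fixes a b c d R :: real
  assumes "\<bar>a\<bar> \<le> R" "\<bar>b\<bar> \<le> R"
  shows "(c - d) * (a - b) \<le> 2 * R * \<bar>c - d\<bar>"
proof -
  have "(c - d) * (a - b) \<le> \<bar>c - d\<bar> * \<bar>a - b\<bar>" by (metis abs_ge_self abs_mult)
  also have "\<dots> \<le> \<bar>c - d\<bar> * (2 * R)" using assms by (intro mult_left_mono) auto
  finally show ?thesis by (simp add: algebra_simps)
qed

lemma Amat_diff:
  assumes q01: "\<forall>i<m. \<forall>j<n. q i j = 0 \<or> q i j = 1" and ij: "i < m" "j < n"
    and x: "\<bar>x\<bar> \<le> Rb m n g w" and mu: "0 \<le> mu" "mu \<le> 1"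
  shows "Amat g q w l x i j \<le> Amat g q w mu y i j + (2 * Rb m n g w * \<bar>l - mu\<bar> + (1 - mu) * \<bar>x - y\<bar>)"
proof -
  have g: "\<bar>g i j\<bar> \<le> Rb m n g w" and w: "\<bar>w i j\<bar> \<le> Rb m n g w"
    using Rb_ge[OF ij, where g=g and w=w] by auto
  have m1: "(1 - mu) * (x - y) \<le> (1 - mu) * \<bar>x - y\<bar>" using mu by (intro mult_left_mono) auto
  have m2: "0 \<le> (1 - mu) * \<bar>x - y\<bar>" using mu by simp
  have "q i j = 0 \<or> q i j = 1" using q01 ij by auto
  then show ?thesis
  proof
    assume q: "q i j = 0"
    have "Amat g q w l x i j - Amat g q w mu y i j = (l - mu) * (g i j - x) + (1 - mu) * (x - y)"
      unfolding Amat_def q by (simp add: algebra_simps)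
    moreover have "(l - mu) * (g i j - x) \<le> 2 * Rb m n g w * \<bar>l - mu\<bar>" by (rule diff_bound[OF g x])
    ultimately show ?thesis using m1 by linarith
  next
    assume q: "q i j = 1"
    have "Amat g q w l x i j - Amat g q w mu y i j = (l - mu) * (g i j - w i j)"
      unfolding Amat_def q by (simp add: algebra_simps)
    moreover have "(l - mu) * (g i j - w i j) \<le> 2 * Rb m n g w * \<bar>l - mu\<bar>" by (rule diff_bound[OF g w])
    ultimately show ?thesis using m2 by linarith
  qed
qed

lemma disc_lip:
  assumes ok: "OK m n" and q01: "\<forall>i<m. \<forall>j<n. q i j = 0 \<or> q i j = 1"
    and l: "0 < l" "l \<le> 1" and mu: "0 < mu" "mu \<le> 1"
  shows "min l mu * \<bar>disc_val m n g q w l - disc_val m n g q w mu\<bar> \<le> 2 * Rb m n g w * \<bar>l - mu\<bar>"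
proof -
  let ?x = "disc_val m n g q w l" and ?y = "disc_val m n g q w mu" and ?R = "Rb m n g w"
  have px: "\<bar>?x\<bar> \<le> ?R" "?x = mval m n (Amat g q w l ?x)"
    using disc_val_props[OF ok q01 l] unfolding shapley_Amat by blast+
  have py: "\<bar>?y\<bar> \<le> ?R" "?y = mval m n (Amat g q w mu ?y)"
    using disc_val_props[OF ok q01 mu] unfolding shapley_Amat by blast+
  have a1: "mval m n (Amat g q w l ?x) \<le> mval m n (Amat g q w mu ?y) + (2 * ?R * \<bar>l - mu\<bar> + (1 - mu) * \<bar>?x - ?y\<bar>)"
    using Amat_diff[OF q01 _ _ px(1)] mu by (intro mval_mono[OF ok]) auto
  have a2: "mval m n (Amat g q w mu ?y) \<le> mval m n (Amat g q w l ?x) + (2 * ?R * \<bar>mu - l\<bar> + (1 - l) * \<bar>?y - ?x\<bar>)"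
    using Amat_diff[OF q01 _ _ py(1)] l by (intro mval_mono[OF ok]) auto
  have b1: "(1 - mu) * \<bar>?x - ?y\<bar> \<le> (1 - min l mu) * \<bar>?x - ?y\<bar>" by (intro mult_right_mono) auto
  have b2: "(1 - l) * \<bar>?y - ?x\<bar> \<le> (1 - min l mu) * \<bar>?x - ?y\<bar>"
    by (subst abs_minus_commute, intro mult_right_mono) auto
  have c1: "?x - ?y \<le> 2 * ?R * \<bar>l - mu\<bar> + (1 - min l mu) * \<bar>?x - ?y\<bar>"
    using a1 b1 by (subst px(2), subst py(2)) linarith
  have c2: "?y - ?x \<le> 2 * ?R * \<bar>l - mu\<bar> + (1 - min l mu) * \<bar>?x - ?y\<bar>"
    using a2 b2 by (subst px(2), subst py(2)) (simp add: abs_minus_commute)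
  have "\<bar>?x - ?y\<bar> \<le> 2 * ?R * \<bar>l - mu\<bar> + (1 - min l mu) * \<bar>?x - ?y\<bar>"
    using c1 c2 by (simp add: abs_le_iff)
  then show ?thesis by (simp add: algebra_simps)
qed

lemma eqz_alg:
  fixes a b c d t s :: real
  assumes t: "0 < t" "t < 1" and s: "0 < s" "s < 1" and a: "a \<noteq> 0" and b: "b \<noteq> 0"
    and e1: "t * a + (1-t) * c = 0" and e2: "t * b + (1-t) * d = 0"
    and e3: "s * a + (1-s) * b = 0" and e4: "s * c + (1-s) * d = 0"
  shows "a * c < 0 \<and> b * d < 0 \<and> a * b < 0 \<and> c * d < 0 \<and> a * d = b * c"
proof -
  have c: "c = - (t / (1-t)) * a" using e1 t by (simp add: field_simps, linarith?)
  have d: "d = - (t / (1-t)) * b" using e2 t by (simp add: field_simps, linarith?)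
  have bb: "b = - (s / (1-s)) * a" using e3 s by (simp add: field_simps, linarith?)
  have tp: "t / (1-t) > 0" using t by simp
  have sp: "s / (1-s) > 0" using s by simp
  have aa: "a * a > 0" using a by (simp add: zero_less_mult_iff linorder_neq_iff disj_commute)
  have bq: "b * b > 0" using b by (simp add: zero_less_mult_iff linorder_neq_iff disj_commute)
  have p1: "(t / (1-t)) * (a * a) > 0" by (rule mult_pos_pos[OF tp aa])
  have p2: "(t / (1-t)) * (b * b) > 0" by (rule mult_pos_pos[OF tp bq])
  have p3: "(s / (1-s)) * (a * a) > 0" by (rule mult_pos_pos[OF sp aa])
  have "a * c = - ((t / (1-t)) * (a * a))" using c by (simp only: mult_minus_left mult_minus_right) (simp add: ac_simps)
  then have ac: "a * c < 0" using p1 by linarith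
  have "b * d = - ((t / (1-t)) * (b * b))" using d by (simp only: mult_minus_left mult_minus_right) (simp add: ac_simps)
  then have bd: "b * d < 0" using p2 by linarith
  have "a * b = - ((s / (1-s)) * (a * a))" using bb by (simp only: mult_minus_left mult_minus_right) (simp add: ac_simps)
  then have ab: "a * b < 0" using p3 by linarith
  have "c * d = ((t / (1-t)) * (t / (1-t))) * (a * b)" using c d by (simp add: ac_simps)
  moreover have "(t / (1-t)) * (t / (1-t)) > 0" by (rule mult_pos_pos[OF tp tp])
  ultimately have cd: "c * d < 0" using ab by (metis mult_pos_neg)
  have "a * d = b * c" using c d by simp
  then show ?thesis using ac bd ab cd by simp
qed

lemma sgn_tr:
  fixes k1 k2 n1 n2 z1 z2 :: real
  assumes "0 < k1" "0 < k2" "(k1 * n1) * (k2 * n2) < 0" "0 < n1 * z1" "0 < n2 * z2"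
  shows "z1 * z2 < 0"
proof -
  have "n1 * n2 < 0"
  proof -
    have "(k1 * n1) * (k2 * n2) = (k1 * k2) * (n1 * n2)" by (simp add: ac_simps)
    moreover have "0 < k1 * k2" using assms by simp
    ultimately show ?thesis using assms(3) by (simp add: mult_less_0_iff zero_less_mult_iff) linarith
  qed
  then show ?thesis using assms(4,5) by (auto simp: mult_less_0_iff zero_less_mult_iff)
qed

lemma sgn_pos:
  fixes n1 n2 z1 z2 :: real
  assumes "0 < n1 * z1" "0 < n2 * z2" "0 < z1 * z2"
  shows "0 < n1 * n2"
  using assms by (auto simp: zero_less_mult_iff)

lemma sp_prod:
  fixes a b c :: real
  assumes "a * b < 0" "b * c < 0"
  shows "0 < a * c"
  using assms by (auto simp: mult_less_0_iff zero_less_mult_iff)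

lemma C_arg:
  fixes yp yq yr ys u :: real
  assumes sp: "(yp - u) * (yr - u) < 0" "(yq - u) * (ys - u) < 0" "(yp - u) * (yq - u) < 0" "(yr - u) * (ys - u) < 0"
    and eq: "(yp - u) * (ys - u) = (yq - u) * (yr - u)"
  shows "u = (yq * yr - yp * ys) / (yq + yr - yp - ys)"
proof -
  have ps: "0 < (yp - u) * (ys - u)" using sp_prod[OF sp(1) sp(4)] .
  have qr: "0 < (yq - u) * (yr - u)" using sp_prod[of "yq - u" "yp - u" "yr - u"] sp(3) sp(1)
    by (simp add: mult.commute)
  have D: "yq + yr - yp - ys \<noteq> 0"
  proof
    assume D0: "yq + yr - yp - ys = 0"
    have "(yp - u) + (ys - u) = (yq - u) + (yr - u)" using D0 by simp
    moreover have "0 < yp - u \<and> 0 < ys - u \<or> yp - u < 0 \<and> ys - u < 0" using ps by (simp add: zero_less_mult_iff)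
    moreover have "0 < yq - u \<and> 0 < yr - u \<or> yq - u < 0 \<and> yr - u < 0" using qr by (simp add: zero_less_mult_iff)
    moreover have "(0 < yp - u) \<longleftrightarrow> (yq - u < 0)" using sp(3) by (auto simp: mult_less_0_iff)
    ultimately show False by linarith
  qed
  have "u * (yq + yr - yp - ys) = yq * yr - yp * ys" using eq by (simp add: algebra_simps)
  then show ?thesis using D by (simp add: field_simps)
qed

definition yv :: "(nat \<Rightarrow> nat \<Rightarrow> real) \<Rightarrow> (nat \<Rightarrow> nat \<Rightarrow> real) \<Rightarrow> (nat \<Rightarrow> nat \<Rightarrow> real) \<Rightarrow> nat \<Rightarrow> nat \<Rightarrow> real" where
  "yv g q w a b = q a b * w a b + (1 - q a b) * g a b"

definition Cset :: "nat \<Rightarrow> nat \<Rightarrow> (nat \<Rightarrow> nat \<Rightarrow> real) \<Rightarrow> (nat \<Rightarrow> nat \<Rightarrow> real) \<Rightarrow> (nat \<Rightarrow> nat \<Rightarrow> real) \<Rightarrow> real set" where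
  "Cset m n g q w = (\<lambda>(a,b). yv g q w a b) ` ({..<m} \<times> {..<n}) \<union>
     (\<lambda>(i,k,j1,j2). (yv g q w i j2 * yv g q w k j1 - yv g q w i j1 * yv g q w k j2) /
                     (yv g q w i j2 + yv g q w k j1 - yv g q w i j1 - yv g q w k j2))
       ` ({..<m} \<times> {..<m} \<times> {..<n} \<times> {..<n})"

definition nn :: "(nat \<Rightarrow> nat \<Rightarrow> real) \<Rightarrow> (nat \<Rightarrow> nat \<Rightarrow> real) \<Rightarrow> (nat \<Rightarrow> nat \<Rightarrow> real) \<Rightarrow> real \<Rightarrow> real \<Rightarrow> nat \<Rightarrow> nat \<Rightarrow> real" where
  "nn g q w v lam a b = q a b * ((1-lam) * (w a b - v) + lam * (g a b - v)) + (1 - q a b) * (g a b - v)"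

definition kap :: "(nat \<Rightarrow> nat \<Rightarrow> real) \<Rightarrow> real \<Rightarrow> nat \<Rightarrow> nat \<Rightarrow> real" where
  "kap q lam a b = q a b + (1 - q a b) * lam"

lemma M_fact:
  assumes "q a b = 0 \<or> q a b = 1"
  shows "Amat g q w lam v a b - v = kap q lam a b * nn g q w v lam a b"
  using assms unfolding Amat_def kap_def nn_def by (auto simp: algebra_simps)

lemma kap_pos: "q a b = 0 \<or> q a b = 1 \<Longrightarrow> 0 < lam \<Longrightarrow> 0 < kap q lam a b"
  unfolding kap_def by auto

lemma kap_eq:
  assumes "q1 = 0 \<or> q1 = 1" "q2 = 0 \<or> q2 = 1" "q3 = 0 \<or> q3 = 1" "q4 = 0 \<or> q4 = 1"
    "q1 + q4 = q2 + (q3::real)"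
  shows "(q1 + (1 - q1) * lam) * (q4 + (1 - q4) * lam) = (q2 + (1 - q2) * lam) * (q3 + (1 - q3) * lam)"
  using assms by auto

lemma kap_le:
  assumes "q1 = 0 \<or> q1 = 1" "q2 = 0 \<or> q2 = 1" "q3 = 0 \<or> q3 = 1" "q4 = 0 \<or> q4 = 1"
    "q2 + q3 < q1 + (q4::real)" "0 < lam" "lam < 1"
  shows "(q2 + (1 - q2) * lam) * (q3 + (1 - q3) * lam) \<le> lam * ((q1 + (1 - q1) * lam) * (q4 + (1 - q4) * lam))"
proof -
  have "lam * lam \<le> lam" using assms by (simp add: mult_left_le_one_le)
  then show ?thesis using assms by auto
qed

lemma Cset_finite: "finite (Cset m n g q w)" unfolding Cset_def by auto

lemma Cset_rat:
  assumes "\<forall>i<m. \<forall>j<n. g i j \<in> \<rat> \<and> q i j \<in> \<rat> \<and> w i j \<in> \<rat>"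
  shows "Cset m n g q w \<subseteq> \<rat>"
proof -
  have y: "yv g q w a b \<in> \<rat>" if "a < m" "b < n" for a b
    using assms that unfolding yv_def by (auto intro!: Rats_add Rats_mult Rats_diff)
  show ?thesis unfolding Cset_def
    by (auto intro!: Rats_add Rats_mult Rats_diff Rats_divide y)
qed

lemma F_tendsto:
  fixes u :: real
  shows "((\<lambda>p. fst p) \<longlongrightarrow> u) (nhds u \<times>\<^sub>F at_right (0::real))" "((\<lambda>p. snd p) \<longlongrightarrow> 0) (nhds u \<times>\<^sub>F at_right (0::real))"
proof -
  have le: "nhds u \<times>\<^sub>F at_right 0 \<le> nhds (u, 0::real)"
    unfolding nhds_prod by (intro prod_filter_mono order_refl at_within_le_nhds)
  have "((\<lambda>p. p) \<longlongrightarrow> (u, 0::real)) (nhds u \<times>\<^sub>F at_right 0)"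
    by (rule tendsto_mono[OF le filterlim_ident])
  from tendsto_fst[OF this] show "((\<lambda>p. fst p) \<longlongrightarrow> u) (nhds u \<times>\<^sub>F at_right (0::real))" by simp
  from tendsto_snd[OF \<open>((\<lambda>p. p) \<longlongrightarrow> (u, 0::real)) _\<close>] show "((\<lambda>p. snd p) \<longlongrightarrow> 0) (nhds u \<times>\<^sub>F at_right (0::real))" by simp
qed

lemma nn_tendsto:
  "((\<lambda>p. nn g q w (fst p) (snd p) a b) \<longlongrightarrow> yv g q w a b - u) (nhds u \<times>\<^sub>F at_right 0)"
proof -
  have "((\<lambda>p. nn g q w (fst p) (snd p) a b) \<longlongrightarrow>
     q a b * ((1-0) * (w a b - u) + 0 * (g a b - u)) + (1 - q a b) * (g a b - u)) (nhds u \<times>\<^sub>F at_right 0)"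
    unfolding nn_def by (intro tendsto_intros F_tendsto)
  then show ?thesis by (rule tendsto_eq_rhs) (simp add: yv_def algebra_simps)
qed

lemma cancel_eq: "(c::real) > 0 \<Longrightarrow> c * x = c * y \<Longrightarrow> x = y" by simp
lemma cancel_le: "(c::real) > 0 \<Longrightarrow> c * x \<le> c * y \<Longrightarrow> x \<le> y" by simp

lemma tuple_ev:
  assumes q01: "\<forall>i<m. \<forall>j<n. q i j = 0 \<or> q i j = 1"
    and idx: "i < m" "k < m" "j1 < n" "j2 < n" and u: "u \<notin> Cset m n g q w"
  shows "\<forall>\<^sub>F p in nhds u \<times>\<^sub>F at_right 0.
    (0 < snd p \<and> snd p < 1 \<and> (\<forall>a<m. \<forall>b<n. 0 < nn g q w (fst p) (snd p) a b * (yv g q w a b - u)))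
    \<longrightarrow> \<not> equalz (\<lambda>a b. Amat g q w (snd p) (fst p) a b - fst p) i k j1 j2 0"
proof -
  define z where "z a b = yv g q w a b - u" for a b
  define N where "N p a b = nn g q w (fst p) (snd p) a b" for p :: "real \<times> real" and a b
  define K where "K p a b = kap q (snd p) a b" for p :: "real \<times> real" and a b
  define facts where "facts p \<longleftrightarrow> 0 < snd p \<and> snd p < 1 \<and> (\<forall>a<m. \<forall>b<n. 0 < N p a b * z a b)" for p :: "real \<times> real"
  define SP where "SP \<longleftrightarrow> z i j1 * z k j1 < 0 \<and> z i j2 * z k j2 < 0 \<and> z i j1 * z i j2 < 0 \<and> z k j1 * z k j2 < 0"
  let ?F = "nhds u \<times>\<^sub>F at_right (0::real)"
  have q4: "q i j1 = 0 \<or> q i j1 = 1" "q i j2 = 0 \<or> q i j2 = 1" "q k j1 = 0 \<or> q k j1 = 1" "q k j2 = 0 \<or> q k j2 = 1"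
    using q01 idx by auto
  have Mf: "Amat g q w (snd p) (fst p) a b - fst p = K p a b * N p a b" if "a < m" "b < n" for p a b
    unfolding K_def N_def by (rule M_fact) (use q01 that in auto)
  have H: "SP \<and> K p i j1 * K p k j2 * (N p i j1 * N p k j2) = K p i j2 * K p k j1 * (N p i j2 * N p k j1)
      \<and> 0 < N p i j1 * N p k j2 \<and> 0 < N p i j2 * N p k j1"
    if fp: "facts p" and eq: "equalz (\<lambda>a b. Amat g q w (snd p) (fst p) a b - fst p) i k j1 j2 0" for p
  proof -
    have lam: "0 < snd p" "snd p < 1" and sg: "\<forall>a<m. \<forall>b<n. 0 < N p a b * z a b" using fp unfolding facts_def by auto
    have Kp: "0 < K p a b" if "a < m" "b < n" for a b unfolding K_def using q01 that lam by (intro kap_pos) auto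
    have Nne: "N p a b \<noteq> 0" if "a < m" "b < n" for a b using sg that by force
    have m1: "Amat g q w (snd p) (fst p) i j1 - fst p = K p i j1 * N p i j1" using Mf idx by blast
    have m2: "Amat g q w (snd p) (fst p) i j2 - fst p = K p i j2 * N p i j2" using Mf idx by blast
    have m3: "Amat g q w (snd p) (fst p) k j1 - fst p = K p k j1 * N p k j1" using Mf idx by blast
    have m4: "Amat g q w (snd p) (fst p) k j2 - fst p = K p k j2 * N p k j2" using Mf idx by blast
    obtain t s where ts: "0 < t" "t < 1" "0 < s" "s < 1"
      "t * (K p i j1 * N p i j1) + (1-t) * (K p k j1 * N p k j1) = 0"
      "t * (K p i j2 * N p i j2) + (1-t) * (K p k j2 * N p k j2) = 0"
      "s * (K p i j1 * N p i j1) + (1-s) * (K p i j2 * N p i j2) = 0"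
      "s * (K p k j1 * N p k j1) + (1-s) * (K p k j2 * N p k j2) = 0"
      using eq unfolding equalz_def m1 m2 m3 m4 by blast
    have ne1: "K p i j1 * N p i j1 \<noteq> 0" using Kp[of i j1] Nne[of i j1] idx by simp
    have ne2: "K p i j2 * N p i j2 \<noteq> 0" using Kp[of i j2] Nne[of i j2] idx by simp
    note E = eqz_alg[OF ts(1,2,3,4) ne1 ne2 ts(5,6,7,8)]
    have E1: "(K p i j1 * N p i j1) * (K p k j1 * N p k j1) < 0" using E by blast
    have E2: "(K p i j2 * N p i j2) * (K p k j2 * N p k j2) < 0" using E by blast
    have E3: "(K p i j1 * N p i j1) * (K p i j2 * N p i j2) < 0" using E by blast
    have E4: "(K p k j1 * N p k j1) * (K p k j2 * N p k j2) < 0" using E by blast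
    have s1: "0 < N p i j1 * z i j1" "0 < N p i j2 * z i j2" "0 < N p k j1 * z k j1" "0 < N p k j2 * z k j2"
      using sg idx by blast+
    have k1: "0 < K p i j1" "0 < K p i j2" "0 < K p k j1" "0 < K p k j2" using Kp idx by blast+
    have z1: "z i j1 * z k j1 < 0" by (rule sgn_tr[OF k1(1) k1(3) E1 s1(1) s1(3)])
    have z2: "z i j2 * z k j2 < 0" by (rule sgn_tr[OF k1(2) k1(4) E2 s1(2) s1(4)])
    have z3: "z i j1 * z i j2 < 0" by (rule sgn_tr[OF k1(1) k1(2) E3 s1(1) s1(2)])
    have z4: "z k j1 * z k j2 < 0" by (rule sgn_tr[OF k1(3) k1(4) E4 s1(3) s1(4)])
    have sp: SP unfolding SP_def using z1 z2 z3 z4 by auto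
    have p1: "0 < z i j1 * z k j2" using sp_prod[OF z1 z4] .
    have p2: "0 < z i j2 * z k j1" using sp_prod[of "z i j2" "z i j1" "z k j1"] z3 z1 by (simp add: mult.commute)
    have X: "0 < N p i j1 * N p k j2" by (rule sgn_pos[OF s1(1) s1(4) p1])
    have Y: "0 < N p i j2 * N p k j1" by (rule sgn_pos[OF s1(2) s1(3) p2])
    have "(K p i j1 * N p i j1) * (K p k j2 * N p k j2) = (K p i j2 * N p i j2) * (K p k j1 * N p k j1)"
      using E by blast
    then have "K p i j1 * K p k j2 * (N p i j1 * N p k j2) = K p i j2 * K p k j1 * (N p i j2 * N p k j1)"
      by (simp add: ac_simps)
    then show ?thesis using sp X Y by simp
  qed
  show ?thesis
  proof (cases SP)
    case False
    show ?thesis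
    proof (rule always_eventually, intro allI impI notI)
      fix p assume f: "0 < snd p \<and> snd p < 1 \<and> (\<forall>a<m. \<forall>b<n. 0 < nn g q w (fst p) (snd p) a b * (yv g q w a b - u))"
        and e: "equalz (\<lambda>a b. Amat g q w (snd p) (fst p) a b - fst p) i k j1 j2 0"
      have fp: "facts p" using f unfolding facts_def N_def z_def by auto
      show False using H[OF fp e] False by blast
    qed
  next
    case True
    have zc: "z a b \<noteq> 0" if "a < m" "b < n" for a b
    proof
      assume "z a b = 0"
      then have "u = yv g q w a b" unfolding z_def by simp
      then have "u \<in> Cset m n g q w" unfolding Cset_def using that by force
      then show False using u by simp
    qed
    have tN: "((\<lambda>p. N p a b) \<longlongrightarrow> z a b) ?F" for a b unfolding N_def z_def by (rule nn_tendsto)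
    consider "q i j1 + q k j2 = q i j2 + q k j1" | "q i j2 + q k j1 < q i j1 + q k j2" | "q i j1 + q k j2 < q i j2 + q k j1"
      by linarith
    then show ?thesis
    proof cases
      case 1
      have nz: "z i j1 * z k j2 - z i j2 * z k j1 \<noteq> 0"
      proof
        assume h: "z i j1 * z k j2 - z i j2 * z k j1 = 0"
        have "u = (yv g q w i j2 * yv g q w k j1 - yv g q w i j1 * yv g q w k j2) /
                   (yv g q w i j2 + yv g q w k j1 - yv g q w i j1 - yv g q w k j2)"
          using True h unfolding SP_def z_def by (intro C_arg) auto
        then have "u \<in> Cset m n g q w" unfolding Cset_def using idx by force
        then show False using u by simp
      qed
      have "((\<lambda>p. N p i j1 * N p k j2 - N p i j2 * N p k j1) \<longlongrightarrow> z i j1 * z k j2 - z i j2 * z k j1) ?F"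
        by (intro tendsto_intros tN)
      then have ev: "\<forall>\<^sub>F p in ?F. N p i j1 * N p k j2 - N p i j2 * N p k j1 \<noteq> 0"
        using nz by (rule tendsto_imp_eventually_ne)
      show ?thesis
      proof (rule eventually_mono[OF ev], intro impI notI)
        fix p assume ne: "N p i j1 * N p k j2 - N p i j2 * N p k j1 \<noteq> 0"
          and f: "0 < snd p \<and> snd p < 1 \<and> (\<forall>a<m. \<forall>b<n. 0 < nn g q w (fst p) (snd p) a b * (yv g q w a b - u))"
          and e: "equalz (\<lambda>a b. Amat g q w (snd p) (fst p) a b - fst p) i k j1 j2 0"
        have fp: "facts p" using f unfolding facts_def N_def z_def by auto
        note h = H[OF fp e]
        have keq: "K p i j1 * K p k j2 = K p i j2 * K p k j1"
          unfolding K_def kap_def using kap_eq[OF q4(1,2,3,4) 1] by simp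
        have kpos: "0 < K p i j1 * K p k j2" using fp idx q4 unfolding facts_def K_def
          by (intro mult_pos_pos kap_pos) auto
        have e1: "K p i j1 * K p k j2 * (N p i j1 * N p k j2) = K p i j2 * K p k j1 * (N p i j2 * N p k j1)"
          using h by blast
        have e2: "K p i j1 * K p k j2 * (N p i j1 * N p k j2) = K p i j1 * K p k j2 * (N p i j2 * N p k j1)"
          using e1 unfolding keq .
        have "N p i j1 * N p k j2 = N p i j2 * N p k j1" by (rule cancel_eq[OF kpos e2])
        then show False using ne by simp
      qed
    next
      case 2
      have pz: "0 < z i j1 * z k j2"
        using True unfolding SP_def by (intro sp_prod[of _ "z k j1"]) (auto simp: mult.commute)
      have "((\<lambda>p. N p i j1 * N p k j2 - snd p * (N p i j2 * N p k j1)) \<longlongrightarrow> z i j1 * z k j2 - 0 * (z i j2 * z k j1)) ?F"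
        by (intro tendsto_intros tN F_tendsto)
      then have ev: "\<forall>\<^sub>F p in ?F. 0 < N p i j1 * N p k j2 - snd p * (N p i j2 * N p k j1)"
        using pz by (intro order_tendstoD(1)) auto
      show ?thesis
      proof (rule eventually_mono[OF ev], intro impI notI)
        fix p assume ne: "0 < N p i j1 * N p k j2 - snd p * (N p i j2 * N p k j1)"
          and f: "0 < snd p \<and> snd p < 1 \<and> (\<forall>a<m. \<forall>b<n. 0 < nn g q w (fst p) (snd p) a b * (yv g q w a b - u))"
          and e: "equalz (\<lambda>a b. Amat g q w (snd p) (fst p) a b - fst p) i k j1 j2 0"
        have fp: "facts p" using f unfolding facts_def N_def z_def by auto
        note h = H[OF fp e]
        have lam: "0 < snd p" "snd p < 1" using fp unfolding facts_def by auto
        have kle: "K p i j2 * K p k j1 \<le> snd p * (K p i j1 * K p k j2)"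
          unfolding K_def kap_def using kap_le[OF q4(1,2,3,4) 2 lam] by simp
        have kpos: "0 < K p i j1 * K p k j2" using fp idx q4 unfolding facts_def K_def
          by (intro mult_pos_pos kap_pos) auto
        have Y: "0 < N p i j2 * N p k j1" using h by simp
        have "K p i j1 * K p k j2 * (N p i j1 * N p k j2) \<le> snd p * (K p i j1 * K p k j2) * (N p i j2 * N p k j1)"
          using h kle Y by (metis mult_right_mono less_imp_le)
        then have "K p i j1 * K p k j2 * (N p i j1 * N p k j2) \<le> K p i j1 * K p k j2 * (snd p * (N p i j2 * N p k j1))"
          by (simp add: ac_simps)
        then have "N p i j1 * N p k j2 \<le> snd p * (N p i j2 * N p k j1)" by (rule cancel_le[OF kpos])
        then show False using ne by simp
      qed
    next
      case 3
      have pz: "0 < z i j2 * z k j1"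
        using True unfolding SP_def by (intro sp_prod[of _ "z i j1"]) (auto simp: mult.commute)
      have "((\<lambda>p. N p i j2 * N p k j1 - snd p * (N p i j1 * N p k j2)) \<longlongrightarrow> z i j2 * z k j1 - 0 * (z i j1 * z k j2)) ?F"
        by (intro tendsto_intros tN F_tendsto)
      then have ev: "\<forall>\<^sub>F p in ?F. 0 < N p i j2 * N p k j1 - snd p * (N p i j1 * N p k j2)"
        using pz by (intro order_tendstoD(1)) auto
      show ?thesis
      proof (rule eventually_mono[OF ev], intro impI notI)
        fix p assume ne: "0 < N p i j2 * N p k j1 - snd p * (N p i j1 * N p k j2)"
          and f: "0 < snd p \<and> snd p < 1 \<and> (\<forall>a<m. \<forall>b<n. 0 < nn g q w (fst p) (snd p) a b * (yv g q w a b - u))"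
          and e: "equalz (\<lambda>a b. Amat g q w (snd p) (fst p) a b - fst p) i k j1 j2 0"
        have fp: "facts p" using f unfolding facts_def N_def z_def by auto
        note h = H[OF fp e]
        have lam: "0 < snd p" "snd p < 1" using fp unfolding facts_def by auto
        have kle: "K p i j1 * K p k j2 \<le> snd p * (K p i j2 * K p k j1)"
          unfolding K_def kap_def using kap_le[OF q4(2,1,4,3) _ lam] 3 by (simp add: ac_simps)
        have kpos: "0 < K p i j2 * K p k j1" using fp idx q4 unfolding facts_def K_def
          by (intro mult_pos_pos kap_pos) auto
        have X: "0 < N p i j1 * N p k j2" using h by simp
        have "K p i j2 * K p k j1 * (N p i j2 * N p k j1) \<le> snd p * (K p i j2 * K p k j1) * (N p i j1 * N p k j2)"
          using h kle X by (metis mult_right_mono less_imp_le)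
        then have "K p i j2 * K p k j1 * (N p i j2 * N p k j1) \<le> K p i j2 * K p k j1 * (snd p * (N p i j1 * N p k j2))"
          by (simp add: ac_simps)
        then have "N p i j2 * N p k j1 \<le> snd p * (N p i j1 * N p k j2)" by (rule cancel_le[OF kpos])
        then show False using ne by simp
      qed
    qed
  qed
qed

lemma local_avoid:
  assumes q01: "\<forall>i<m. \<forall>j<n. q i j = 0 \<or> q i j = 1" and u: "u \<notin> Cset m n g q w"
  shows "\<exists>eta>0. \<exists>del>0. \<forall>v lam. \<bar>v - u\<bar> < eta \<longrightarrow> 0 < lam \<longrightarrow> lam < del \<longrightarrow>
           \<not> STRUCT m n (\<lambda>a b. Amat g q w lam v a b - v) 0"
proof -
  let ?F = "nhds u \<times>\<^sub>F at_right (0::real)"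
  have zc: "yv g q w a b - u \<noteq> 0" if "a < m" "b < n" for a b
  proof
    assume "yv g q w a b - u = 0"
    then have "u = yv g q w a b" by simp
    then have "u \<in> Cset m n g q w" unfolding Cset_def using that by force
    then show False using u by simp
  qed
  have ev1: "\<forall>\<^sub>F p in ?F. 0 < snd p \<and> snd p < 1"
  proof -
    have "eventually (\<lambda>l::real. 0 < l \<and> l < 1) (at_right 0)"
      by (auto simp: eventually_at_right[of 0 1] intro!: exI[of _ 1])
    from eventually_prodI[OF always_eventually[of "\<lambda>_::real. True"] this] show ?thesis by simp
  qed
  have ev2: "\<forall>\<^sub>F p in ?F. \<forall>a\<in>{..<m}. \<forall>b\<in>{..<n}. 0 < nn g q w (fst p) (snd p) a b * (yv g q w a b - u)"
  proof (intro eventually_ball_finite ballI finite_lessThan)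
    fix a b assume ab: "a \<in> {..<m}" "b \<in> {..<n}"
    have "((\<lambda>p. nn g q w (fst p) (snd p) a b * (yv g q w a b - u)) \<longlongrightarrow> (yv g q w a b - u) * (yv g q w a b - u)) ?F"
      by (intro tendsto_intros nn_tendsto)
    moreover have "0 < (yv g q w a b - u) * (yv g q w a b - u)" using zc[of a b] ab
      by (simp add: zero_less_mult_iff linorder_neq_iff disj_commute)
    ultimately show "\<forall>\<^sub>F p in ?F. 0 < nn g q w (fst p) (snd p) a b * (yv g q w a b - u)"
      by (rule order_tendstoD(1))
  qed
  have ev3: "\<forall>\<^sub>F p in ?F. \<forall>i\<in>{..<m}. \<forall>k\<in>{..<m}. \<forall>j1\<in>{..<n}. \<forall>j2\<in>{..<n}.
    (0 < snd p \<and> snd p < 1 \<and> (\<forall>a<m. \<forall>b<n. 0 < nn g q w (fst p) (snd p) a b * (yv g q w a b - u)))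
    \<longrightarrow> \<not> equalz (\<lambda>a b. Amat g q w (snd p) (fst p) a b - fst p) i k j1 j2 0"
    by (intro eventually_ball_finite ballI finite_lessThan tuple_ev[OF q01 _ _ _ _ u]) auto
  have ev: "\<forall>\<^sub>F p in ?F. \<not> STRUCT m n (\<lambda>a b. Amat g q w (snd p) (fst p) a b - fst p) 0"
  proof (rule eventually_mono[OF eventually_conj[OF ev1 eventually_conj[OF ev2 ev3]]])
    fix p :: "real \<times> real"
    assume h: "(0 < snd p \<and> snd p < 1) \<and> (\<forall>a\<in>{..<m}. \<forall>b\<in>{..<n}. 0 < nn g q w (fst p) (snd p) a b * (yv g q w a b - u)) \<and>
      (\<forall>i\<in>{..<m}. \<forall>k\<in>{..<m}. \<forall>j1\<in>{..<n}. \<forall>j2\<in>{..<n}.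
       (0 < snd p \<and> snd p < 1 \<and> (\<forall>a<m. \<forall>b<n. 0 < nn g q w (fst p) (snd p) a b * (yv g q w a b - u)))
       \<longrightarrow> \<not> equalz (\<lambda>a b. Amat g q w (snd p) (fst p) a b - fst p) i k j1 j2 0)"
    have f: "0 < snd p \<and> snd p < 1 \<and> (\<forall>a<m. \<forall>b<n. 0 < nn g q w (fst p) (snd p) a b * (yv g q w a b - u))"
      using h by auto
    have noeq: "\<not> equalz (\<lambda>a b. Amat g q w (snd p) (fst p) a b - fst p) i k j1 j2 0"
      if "i < m" "k < m" "j1 < n" "j2 < n" for i k j1 j2 using h f that by blast
    have noent: "Amat g q w (snd p) (fst p) a b - fst p \<noteq> 0" if ab: "a < m" "b < n" for a b
    proof -
      have qa: "q a b = 0 \<or> q a b = 1" using q01 ab by auto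
      have "Amat g q w (snd p) (fst p) a b - fst p = kap q (snd p) a b * nn g q w (fst p) (snd p) a b"
        by (rule M_fact[where q=q and a=a and b=b, OF qa])
      moreover have "0 < kap q (snd p) a b" using kap_pos[where q=q and a=a and b=b, OF qa] f by auto
      moreover have "nn g q w (fst p) (snd p) a b \<noteq> 0" using f ab by force
      ultimately show ?thesis by simp
    qed
    show "\<not> STRUCT m n (\<lambda>a b. Amat g q w (snd p) (fst p) a b - fst p) 0"
      unfolding STRUCT_def using noeq noent by blast
  qed
  obtain Pf Pg where P: "eventually Pf (nhds u)" "eventually Pg (at_right (0::real))"
    "\<forall>x y. Pf x \<longrightarrow> Pg y \<longrightarrow> \<not> STRUCT m n (\<lambda>a b. Amat g q w y x a b - x) 0"
    using ev unfolding eventually_prod_filter by auto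
  obtain eta where eta: "eta > 0" "\<forall>x. dist x u < eta \<longrightarrow> Pf x" using P(1) unfolding eventually_nhds_metric by auto
  have "\<exists>b>0. \<forall>y>0. y < b \<longrightarrow> Pg y" using P(2) eventually_at_right[of "0::real" 1] by simp
  then obtain del where del: "del > 0" "\<forall>y>0. y < del \<longrightarrow> Pg y" by auto
  show ?thesis
    using eta del P(3) by (intro exI[of _ eta] exI[of _ del] conjI allI impI) (auto simp: dist_real_def)
qed

lemma disc_cont:
  assumes ok: "OK m n" and q01: "\<forall>i<m. \<forall>j<n. q i j = 0 \<or> q i j = 1"
  shows "continuous_on {0<..<1} (disc_val m n g q w)"
  unfolding continuous_on_iff
proof (intro ballI allI impI)
  fix x e :: real assume x: "x \<in> {0<..<1}" and e: "0 < e"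
  define R where "R = Rb m n g w"
  have R0: "0 \<le> R" unfolding R_def by (rule Rb_nonneg)
  define d where "d = min (x/2) (e * x / (4 * R + 1))"
  have x0: "0 < x" "x < 1" using x by auto
  have d0: "0 < d" unfolding d_def using x0 e R0 by auto
  show "\<exists>d>0. \<forall>x'\<in>{0<..<1}. dist x' x < d \<longrightarrow> dist (disc_val m n g q w x') (disc_val m n g q w x) < e"
  proof (intro exI[of _ d] conjI ballI impI d0)
    fix x' assume x': "x' \<in> {0<..<1}" and dx: "dist x' x < d"
    have x'0: "0 < x'" "x' < 1" using x' by auto
    have dd: "\<bar>x' - x\<bar> < d" using dx by (simp add: dist_real_def)
    have "\<bar>x' - x\<bar> < x / 2" using dd unfolding d_def by auto
    moreover have "x - x' \<le> \<bar>x' - x\<bar>" by simp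
    ultimately have "x - x' < x / 2" by linarith
    then have mn: "x / 2 \<le> min x' x" using x0 by auto
    let ?D = "\<bar>disc_val m n g q w x' - disc_val m n g q w x\<bar>"
    have L: "min x' x * ?D \<le> 2 * R * \<bar>x' - x\<bar>"
      unfolding R_def using x0 x'0 by (intro disc_lip[OF ok q01]) auto
    have "x / 2 * ?D \<le> min x' x * ?D" using mn by (intro mult_right_mono) auto
    also have "\<dots> \<le> 2 * R * \<bar>x' - x\<bar>" by (rule L)
    also have "\<dots> \<le> 2 * R * d" using dd R0 by (intro mult_left_mono) auto
    also have "\<dots> \<le> 2 * R * (e * x / (4 * R + 1))" using R0 unfolding d_def by (intro mult_left_mono) auto
    also have "\<dots> < e * x / 2"
    proof -
      have "2 * R * (e * x / (4 * R + 1)) = (e * x) * (2 * R / (4 * R + 1))" by simp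
      moreover have "2 * R / (4 * R + 1) < 1/2" using R0 by (simp add: field_simps)
      moreover have "0 < e * x" using e x0 by simp
      ultimately show ?thesis by (metis mult_strict_left_mono times_divide_eq_right mult_1_right)
    qed
    finally have "x / 2 * ?D < e * x / 2" .
    then have "?D < e" using x0 by (simp add: field_simps)
    then show "dist (disc_val m n g q w x') (disc_val m n g q w x) < e" by (simp add: dist_real_def)
  qed
qed

lemma avoid_f:
  assumes ok: "OK m n" and q01: "\<forall>i<m. \<forall>j<n. q i j = 0 \<or> q i j = 1" and u: "u \<notin> Cset m n g q w"
  shows "\<exists>eta>0. \<exists>del>0. \<forall>lam. 0 < lam \<longrightarrow> lam < del \<longrightarrow> eta \<le> \<bar>disc_val m n g q w lam - u\<bar>"
proof -
  obtain eta del where ed: "eta > 0" "del > 0"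
    "\<forall>v lam. \<bar>v - u\<bar> < eta \<longrightarrow> 0 < lam \<longrightarrow> lam < del \<longrightarrow> \<not> STRUCT m n (\<lambda>a b. Amat g q w lam v a b - v) 0"
    using local_avoid[OF q01 u] by blast
  have main: "\<forall>lam. 0 < lam \<longrightarrow> lam < min del 1 \<longrightarrow> eta \<le> \<bar>disc_val m n g q w lam - u\<bar>"
  proof (intro allI impI)
    fix lam :: real assume l: "0 < lam" "lam < min del 1"
    let ?v = "disc_val m n g q w lam"
    have z: "mval m n (\<lambda>a b. Amat g q w lam ?v a b - ?v) = 0"
      using disc_zero[OF ok q01, of lam] l by auto
    have "STRUCT m n (\<lambda>a b. Amat g q w lam ?v a b - ?v) (mval m n (\<lambda>a b. Amat g q w lam ?v a b - ?v))"
      using mval_struct ok unfolding OK_def by blast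
    then have "STRUCT m n (\<lambda>a b. Amat g q w lam ?v a b - ?v) 0" unfolding z .
    then show "eta \<le> \<bar>?v - u\<bar>" using ed(3) l by force
  qed
  have "min del 1 > 0" using ed by simp
  then show ?thesis using main ed(1) by blast
qed

lemma final_limit:
  assumes ok: "OK m n" and q01: "\<forall>i<m. \<forall>j<n. q i j = 0 \<or> q i j = 1"
  shows "\<exists>c \<in> Cset m n g q w. ((\<lambda>l. disc_val m n g q w l) \<longlongrightarrow> c) (at_right 0)"
proof -
  define f where "f = disc_val m n g q w"
  define C where "C = Cset m n g q w"
  define R where "R = Rb m n g w"
  have finC: "finite C" unfolding C_def by (rule Cset_finite)
  have fb: "\<bar>f l\<bar> \<le> R" if "0 < l" "l < 1" for l
    using disc_val_props[OF ok q01, of l] that unfolding f_def R_def by auto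
  have fc: "continuous_on {0<..<1} f" unfolding f_def by (rule disc_cont[OF ok q01])
  have avoid: "\<exists>eta>0. \<exists>del>0. \<forall>lam. 0 < lam \<longrightarrow> lam < del \<longrightarrow> eta \<le> \<bar>f lam - u\<bar>" if "u \<notin> C" for u
    using avoid_f[OF ok q01] that unfolding f_def C_def by blast
  have step1: "(\<exists>del>0. \<forall>l. 0 < l \<longrightarrow> l < del \<longrightarrow> u < f l) \<or> (\<exists>del>0. \<forall>l. 0 < l \<longrightarrow> l < del \<longrightarrow> f l < u)"
    if uC: "u \<notin> C" for u
  proof (rule ccontr)
    assume na: "\<not> ?thesis"
    obtain eta del where ed: "eta > 0" "del > 0" "\<forall>lam. 0 < lam \<longrightarrow> lam < del \<longrightarrow> eta \<le> \<bar>f lam - u\<bar>"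
      using avoid[OF uC] by blast
    define d1 where "d1 = min del (1/2)"
    have d1: "0 < d1" "d1 \<le> del" "d1 < 1" unfolding d1_def using ed by auto
    have ne: "f l \<noteq> u" if "0 < l" "l < d1" for l using ed(1,3) that d1 by force
    obtain l1 where l1: "0 < l1" "l1 < d1" "\<not> u < f l1" using na d1(1) by blast
    obtain l2 where l2: "0 < l2" "l2 < d1" "\<not> f l2 < u" using na d1(1) by blast
    have f1: "f l1 \<le> u" and f2: "u \<le> f l2" using l1 l2 by auto
    have cont: "continuous_on {a..b} f" if "0 < a" "b < 1" for a b
      by (rule continuous_on_subset[OF fc]) (use that in auto)
    show False
    proof (cases "l1 \<le> l2")
      case True
      obtain x where x: "l1 \<le> x" "x \<le> l2" "f x = u"
        using IVT'[of f l1 u l2, OF f1 f2 True cont] l1 l2 d1 by auto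
      have "0 < x" "x < d1" using x l1 l2 by auto
      then show False using ne[of x] x by simp
    next
      case False
      then have le: "l2 \<le> l1" by simp
      obtain x where x: "l2 \<le> x" "x \<le> l1" "f x = u"
        using IVT2'[of f l1 u l2, OF f1 f2 le cont] l1 l2 d1 by auto
      have "0 < x" "x < d1" using x l1 l2 by auto
      then show False using ne[of x] x by simp
    qed
  qed
  define A where "A = {u. \<exists>del>0. \<forall>l. 0 < l \<longrightarrow> l < del \<longrightarrow> u < f l}"
  have AR: "- R - 1 \<in> A" unfolding A_def
  proof (intro CollectI exI[of _ 1] conjI allI impI)
    show "(0::real) < 1" by simp
    fix l :: real assume "0 < l" "l < 1"
    then show "- R - 1 < f l" using fb[of l] by (auto simp: abs_le_iff)
  qed
  have Ab: "u \<le> R" if uA: "u \<in> A" for u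
  proof -
    obtain del where del: "del > 0" "\<forall>l. 0 < l \<longrightarrow> l < del \<longrightarrow> u < f l" using uA unfolding A_def by auto
    define l where "l = min del 1 / 2"
    have l: "0 < l" "l < del" "l < 1" unfolding l_def using del by auto
    then show ?thesis using del(2) fb[of l] by (auto simp: abs_le_iff)
  qed
  have bdd: "bdd_above A" using Ab by (intro bdd_aboveI) blast
  have Ane: "A \<noteq> {}" using AR by blast
  define c where "c = Sup A"
  have conv: "\<exists>del>0. \<forall>l. 0 < l \<longrightarrow> l < del \<longrightarrow> \<bar>f l - c\<bar> < e" if e: "0 < e" for e
  proof -
    have "c - e < c" using e by simp
    then obtain a where a: "a \<in> A" "c - e < a" using less_cSup_iff[OF Ane bdd] unfolding c_def by blast
    obtain da where da: "da > 0" "\<forall>l. 0 < l \<longrightarrow> l < da \<longrightarrow> a < f l" using a(1) unfolding A_def by auto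
    have "infinite {c<..<c+e}" using e by (intro infinite_Ioo) simp
    then have "\<not> {c<..<c+e} \<subseteq> C" using finC finite_subset by blast
    then obtain u where u0: "u \<in> {c<..<c+e}" "u \<notin> C" by blast
    then have u: "c < u" "u < c + e" "u \<notin> C" by auto
    have uA: "u \<notin> A"
    proof
      assume "u \<in> A"
      then have "u \<le> c" unfolding c_def by (rule cSup_upper[OF _ bdd])
      then show False using u by simp
    qed
    obtain du where du: "du > 0" "\<forall>l. 0 < l \<longrightarrow> l < du \<longrightarrow> f l < u"
      using step1[OF u(3)] uA unfolding A_def by blast
    show ?thesis
    proof (intro exI[of _ "min da du"] conjI allI impI)
      show "0 < min da du" using da du by simp
      fix l :: real assume "0 < l" "l < min da du"
      then have "a < f l" "f l < u" using da du by auto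
      then show "\<bar>f l - c\<bar> < e" using a u by (auto simp: abs_less_iff)
    qed
  qed
  have cC: "c \<in> C"
  proof (rule ccontr)
    assume "c \<notin> C"
    then obtain eta del where ed: "eta > 0" "del > 0" "\<forall>lam. 0 < lam \<longrightarrow> lam < del \<longrightarrow> eta \<le> \<bar>f lam - c\<bar>"
      using avoid by blast
    obtain d2 where d2: "d2 > 0" "\<forall>l. 0 < l \<longrightarrow> l < d2 \<longrightarrow> \<bar>f l - c\<bar> < eta" using conv[OF ed(1)] by blast
    define l where "l = min del d2 / 2"
    have "0 < l" "l < del" "l < d2" unfolding l_def using ed d2 by auto
    then show False using ed(3) d2(2) by force
  qed
  have "(f \<longlongrightarrow> c) (at_right 0)"
  proof (rule tendstoI)
    fix e :: real assume "0 < e"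
    then obtain del where del: "del > 0" "\<forall>l. 0 < l \<longrightarrow> l < del \<longrightarrow> \<bar>f l - c\<bar> < e" using conv by blast
    show "\<forall>\<^sub>F x in at_right 0. dist (f x) c < e"
      unfolding eventually_at_right[of "0::real" 1, OF zero_less_one]
      using del by (intro exI[of _ del]) (auto simp: dist_real_def)
  qed
  then show ?thesis using cC unfolding f_def C_def by blast
qed

theorem theorem1:
  fixes m n :: nat and g q w :: "nat \<Rightarrow> nat \<Rightarrow> real"
  assumes "m \<ge> 1" and "n \<ge> 1"
    and "\<forall>i<m. \<forall>j<n. g i j \<in> \<rat> \<and> q i j \<in> \<rat> \<and> w i j \<in> \<rat>"
    and "\<forall>i<m. \<forall>j<n. q i j = 0 \<or> q i j = 1"
    and "min m n < 3"
  shows "\<exists>v \<in> \<rat>. ((\<lambda>l. disc_val m n g q w l) \<longlongrightarrow> v) (at_right 0)"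
proof -
  have ok: "OK m n" unfolding OK_def using assms(1,2,5) by auto
  obtain c where c: "c \<in> Cset m n g q w" "((\<lambda>l. disc_val m n g q w l) \<longlongrightarrow> c) (at_right 0)"
    using final_limit[OF ok assms(4)] by blast
  have "c \<in> \<rat>" using Cset_rat[OF assms(3)] c(1) by blast
  then show ?thesis using c(2) by blast
qed

end
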